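(* For the Adaptive-Threshold Dealer, let $\tau$ be a stage and $b$ a possible value of $\mathbf B^\tau$. Conditioned on $\mathbf B^\tau=b$, at every turn $t$ of stage $\tau+1$ (within the Adaptive phase), the number of mini-decks $i$ with $1\le x_{i,t}\le 4\ln(b)/\epsilon$ is at least $$\frac{\epsilon}{8}\cdot\frac{d}{\ln b}.$$
   Context: Adaptive-Threshold Dealer with $d$ mini-decks on $n$ cards ($d\mid n$): the deck is split into $d$ mini-decks, each a fixed ordered stack of $n/d$ cards. Let $L_{i,t}$ be the number of cards drawn from mini-deck $i$ before turn $t$. Adaptive phase (turns $t=1,\dots,n-2d$): repeatedly sample $i\in[d]$ uniformly until $L_{i,t}<\lceil t/d\rceil+1$, then draw the top card of mini-deck $i$. Holes at turn $t$: $x_{i,t}=\lceil t/d\rceil+1-L_{i,t}$. Stage $\tau\ge1$ consists of turns $(\tau-1)d+1,\dots,\tau d$. $\mathbf X_i^\tau=\tau+2-\mathbf L_i^\tau$, where $\mathbf L_i^\tau$ is the number of cards drawn from mini-deck $i$ in turns $1,\dots,\tau d$; $\mathbf X^0=(2,\dots,2)$. With $\epsilon=1/200$, $\Phi(x)=\sum_{i=1}^d(1+\epsilon)^{x_i}$ and $\mathbf B^\tau=\max\{\Phi(\mathbf X^\tau)/d,\ 16/\epsilon^2\}$. *)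

theory Defs
  imports Complex_Main
begin

text \<open>Mini-decks are indexed by 0..d-1.
A run (history) of the dealer is described by a choice function c: c s is the mini-deck
from which the card at turn s (s >= 1) is drawn.\<close>

definition atd_eps :: real where "atd_eps = 1/200"

definition atd_thr :: "nat \<Rightarrow> nat \<Rightarrow> nat" where
  "atd_thr d t = nat \<lceil>real t / real d\<rceil> + 1"

definition atd_L :: "(nat \<Rightarrow> nat) \<Rightarrow> nat \<Rightarrow> nat \<Rightarrow> nat" where
  "atd_L c i t = card {s. 1 \<le> s \<and> s < t \<and> c s = i}"

definition atd_x :: "nat \<Rightarrow> (nat \<Rightarrow> nat) \<Rightarrow> nat \<Rightarrow> nat \<Rightarrow> int" where
  "atd_x d c i t = int (atd_thr d t) - int (atd_L c i t)"

text \<open>A history c is a possible run of the adaptive phase for all turns s < t: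
at each such turn the drawn mini-deck is a valid index and lies below the threshold
(these are exactly the choices made with positive probability by the rejection sampling).\<close>
definition atd_valid :: "nat \<Rightarrow> (nat \<Rightarrow> nat) \<Rightarrow> nat \<Rightarrow> bool" where
  "atd_valid d c t \<longleftrightarrow> (\<forall>s. 1 \<le> s \<and> s < t \<longrightarrow> c s < d \<and> atd_L c (c s) s < atd_thr d s)"

definition atd_X :: "nat \<Rightarrow> (nat \<Rightarrow> nat) \<Rightarrow> nat \<Rightarrow> nat \<Rightarrow> int" where
  "atd_X d c tau i = int tau + 2 - int (atd_L c i (tau * d + 1))"

definition atd_Phi :: "nat \<Rightarrow> (nat \<Rightarrow> int) \<Rightarrow> real" where
  "atd_Phi d x = (\<Sum>i<d. (1 + atd_eps) powr (real_of_int (x i)))"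

definition atd_B :: "nat \<Rightarrow> (nat \<Rightarrow> nat) \<Rightarrow> nat \<Rightarrow> real" where
  "atd_B d c tau = max (atd_Phi d (atd_X d c tau) / real d) (16 / atd_eps ^ 2)"

end

theory Submission
  imports Defs
begin

lemma ln_640000: "ln (640000::real) \<le> 14"
proof -
  have "exp (14::real) = exp (14/200) ^ 200"
    using exp_of_nat_mult[of 200 "14/200::real"] by simp
  also have "\<dots> \<ge> (1 + 14/200) ^ 200"
    by (intro power_mono) (use exp_ge_add_one_self[of "14/200::real"] in auto)
  finally have "exp (14::real) \<ge> (1 + 14/200)^200" .
  moreover have "(1 + 14/200::real)^200 \<ge> 640000"
  proof -
    have a: "(1 + 14/200::real)^10 \<ge> 196/100" by (simp add: power_numeral_reduce)
    have "(1 + 14/200::real)^200 = ((1 + 14/200)^10)^20" by (simp flip: power_mult)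
    also have "\<dots> \<ge> (196/100)^20" by (rule power_mono[OF a]) simp
    finally have "(1 + 14/200::real)^200 \<ge> (196/100)^20" .
    moreover have "(196/100::real)^20 \<ge> 640000" by (simp add: power_numeral_reduce)
    ultimately show ?thesis by linarith
  qed
  ultimately have "640000 \<le> exp (14::real)" by linarith
  thus ?thesis by (metis ln_exp ln_le_cancel_iff exp_gt_zero zero_less_numeral)
qed

lemma b_big: fixes b :: real assumes "b \<ge> 640000" shows "1600 * ln b \<le> b"
proof -
  have "ln (b/640000) \<le> b/640000 - 1" using assms by (intro ln_le_minus_one) auto
  moreover have "ln (b/640000) = ln b - ln 640000" using assms by (simp add: ln_div)
  ultimately have "ln b \<le> b/640000 + 13" using ln_640000 by linarith
  thus ?thesis using assms by linarith
qed

lemma exp_big: fixes b y :: real assumes "b \<ge> 640000" "y \<ge> ln b"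
  shows "1600 * y \<le> exp y"
proof -
  have bp: "b > 0" using assms by auto
  have "exp (y - ln b) \<ge> 1 + (y - ln b)" by (rule exp_ge_add_one_self)
  moreover have "exp (y - ln b) = exp y / b" using bp by (simp add: exp_diff)
  ultimately have "exp y \<ge> b * (1 + y - ln b)" using bp by (simp add: field_simps)
  moreover have "b * (1 + y - ln b) - 1600 * y \<ge> b - 1600 * ln b"
  proof -
    have "(b - 1600) * (y - ln b) \<ge> 0" using assms by auto
    thus ?thesis by (simp add: algebra_simps)
  qed
  ultimately show ?thesis using b_big[OF assms(1)] by linarith
qed

theorem claim3p10:
  fixes n d tau t :: nat and c :: "nat \<Rightarrow> nat" and b :: real
  assumes "d \<ge> 1" and "d dvd n"
    and "tau * d + 1 \<le> t" and "t \<le> (tau + 1) * d"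
    and "1 \<le> t" and "t + 2 * d \<le> n"
    and "atd_valid d c t"
    and "atd_B d c tau = b"
  shows "real (card {i \<in> {..<d}. 1 \<le> atd_x d c i t \<and> real_of_int (atd_x d c i t) \<le> 4 * ln b / atd_eps})
           \<ge> atd_eps / 8 * (real d / ln b)"
proof -
  define e where "e = atd_eps"
  have e: "e = 1/200" by (simp add: e_def atd_eps_def)
  have epos: "e > 0" by (simp add: e)
  define K where "K = 4 * ln b / e"
  define x where "x i = atd_x d c i t" for i
  define X where "X i = atd_X d c tau i" for i
  define M where "M = {i \<in> {..<d}. 1 \<le> x i \<and> real_of_int (x i) \<le> K}"
  have dpos: "real d > 0" using assms(1) by auto
  have "16 / atd_eps ^ 2 = 640000" by (simp add: atd_eps_def power2_eq_square)
  hence bge: "b \<ge> 640000" using assms(8) unfolding atd_B_def by (metis max.cobounded2)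
  have lnb: "ln b > 0" using bge by simp
  have Kpos: "K > 0" using lnb by (simp add: K_def e)
  have thr: "atd_thr d t = tau + 2"
  proof -
    have "real tau * real d < real t" using assms(3)
      by (metis of_nat_less_iff of_nat_mult Suc_le_eq Suc_eq_plus1)
    hence 1: "real tau < real t / real d" using dpos by (simp add: field_simps)
    have "real t \<le> (real tau + 1) * real d" using assms(4)
      by (metis of_nat_le_iff of_nat_mult of_nat_Suc Suc_eq_plus1 add.commute)
    hence 2: "real t / real d \<le> real tau + 1" using dpos by (simp add: field_simps)
    have "\<lceil>real t / real d\<rceil> = int tau + 1"
      by (rule ceiling_unique) (use 1 2 in auto)
    thus ?thesis by (simp add: atd_thr_def)
  qed
  have Lmono: "atd_L c i (tau * d + 1) \<le> atd_L c i t" for i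
    unfolding atd_L_def by (rule card_mono) (use assms(3) in auto)
  have xX: "x i \<le> X i" for i
    using Lmono[of i] thr by (simp add: x_def X_def atd_x_def atd_X_def)
  have Phi: "(\<Sum>i<d. (1 + e) powr real_of_int (X i)) \<le> b * real d"
  proof -
    have "atd_Phi d (atd_X d c tau) / real d \<le> b" using assms(8) by (simp add: atd_B_def)
    thus ?thesis using dpos by (simp add: atd_Phi_def X_def e_def field_simps)
  qed
  have Phix: "(\<Sum>i<d. (1 + e) powr real_of_int (x i)) \<le> b * real d"
    by (rule order.trans[OF sum_mono Phi]) (use xX e in auto)
  have sumL: "(\<Sum>i<d. atd_L c i t) = t - 1"
  proof -
    have "(\<Sum>i<d. atd_L c i t) = card (\<Union>i<d. {s. 1 \<le> s \<and> s < t \<and> c s = i})"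
      unfolding atd_L_def by (rule card_UN_disjoint[symmetric]) auto
    also have "(\<Union>i<d. {s. 1 \<le> s \<and> s < t \<and> c s = i}) = {1..<t}"
      using assms(7) by (auto simp: atd_valid_def)
    finally show ?thesis by simp
  qed
  have sumx: "(\<Sum>i<d. x i) = int d * int (tau + 2) - int (t - 1)"
  proof -
    have "(\<Sum>i<d. x i) = (\<Sum>i<d. int (tau + 2) - int (atd_L c i t))"
      by (simp add: x_def atd_x_def thr)
    also have "\<dots> = int d * int (tau + 2) - int (\<Sum>i<d. atd_L c i t)"
      by (simp add: sum_subtractf)
    finally show ?thesis using sumL by simp
  qed
  have sumxd: "real d \<le> (\<Sum>i<d. real_of_int (x i))"
  proof -
    have "int d \<le> (\<Sum>i<d. x i)" proof -
      have "int t \<le> int d * int tau + int d" using assms(4) by (simp add: algebra_simps flip: of_nat_mult of_nat_add)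
      thus ?thesis using sumx assms(5) by (simp add: algebra_simps of_nat_diff)
    qed
    hence "real_of_int (int d) \<le> real_of_int (\<Sum>i<d. x i)" by linarith
    thus ?thesis by simp
  qed
  have lam: "e/2 \<le> ln (1 + e)"
  proof -
    have "e - e^2 \<le> ln (1 + e)" using ln_one_plus_pos_lower_bound[of e] unfolding e by simp
    thus ?thesis unfolding e by (simp add: power2_eq_square)
  qed
  have large: "real_of_int (x i) \<le> (1 + e) powr real_of_int (x i) / (2 * b)"
    if "real_of_int (x i) > K" for i
  proof -
    define v where "v = real_of_int (x i)"
    define y where "y = v * ln (1 + e) / 2"
    have vK: "v > K" using that v_def by simp
    have "y \<ge> K * (e/2) / 2" unfolding y_def
      using vK lam Kpos epos by (intro divide_right_mono mult_mono) auto
    hence yl: "y \<ge> ln b" by (simp add: K_def e)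
    have v8: "v \<le> 800 * y"
    proof -
      have "v * (e/2) \<le> v * ln (1+e)" using lam vK Kpos by (intro mult_left_mono) auto
      thus ?thesis by (simp add: y_def e)
    qed
    have pw: "(1 + e) powr v = exp y * exp y"
      by (simp add: powr_def e y_def flip: exp_add)
    have eyb: "exp y \<ge> b" using yl bge by (metis exp_le_cancel_iff exp_ln less_le_trans zero_less_numeral order_less_le_trans)
    have "1600 * y \<le> exp y" by (rule exp_big[OF bge yl])
    hence "v \<le> exp y / 2" using v8 by linarith
    also have "\<dots> \<le> exp y * exp y / (2 * b)"
      using eyb bge by (simp add: field_simps)
    finally show ?thesis using pw v_def by simp
  qed
  have pt: "real_of_int (x i) \<le> (if i \<in> M then K else 0) + (1 + e) powr real_of_int (x i) / (2 * b)"
    if "i < d" for i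
  proof -
    have nn: "(1 + e) powr real_of_int (x i) / (2 * b) \<ge> 0" using bge by simp
    consider "x i \<le> 0" | "1 \<le> x i \<and> real_of_int (x i) \<le> K" | "real_of_int (x i) > K" by linarith
    thus ?thesis
    proof cases
      case 1 then show ?thesis using nn Kpos by auto
    next
      case 2 then have "i \<in> M" using that by (simp add: M_def)
      then show ?thesis using 2 nn by auto
    next
      case 3 then show ?thesis using large[OF 3] Kpos by auto
    qed
  qed
  have "real d \<le> (\<Sum>i<d. (if i \<in> M then K else 0) + (1 + e) powr real_of_int (x i) / (2 * b))"
    using sumxd sum_mono[of "{..<d}", OF pt] by (meson lessThan_iff order.trans)
  also have "\<dots> = K * real (card M) + (\<Sum>i<d. (1 + e) powr real_of_int (x i)) / (2 * b)"
  proof -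
    have "(\<Sum>i<d. (if i \<in> M then K else 0)) = (\<Sum>i\<in>{i\<in>{..<d}. i \<in> M}. K)"
      by (rule sum.inter_filter[symmetric]) simp
    also have "{i\<in>{..<d}. i \<in> M} = M" by (auto simp: M_def)
    finally show ?thesis by (simp add: sum.distrib sum_divide_distrib)
  qed
  also have "\<dots> \<le> K * real (card M) + real d / 2"
    using Phix bge by (simp add: field_simps)
  finally have "real d / 2 \<le> K * real (card M)" by simp
  hence "real d / (2 * K) \<le> real (card M)" using Kpos by (simp add: field_simps)
  moreover have "real d / (2 * K) = atd_eps / 8 * (real d / ln b)"
    using lnb by (simp add: K_def e_def field_simps)
  ultimately show ?thesis by (simp add: M_def x_def K_def e_def mult.commute)
qed

end
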